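(* Let $\alpha$ be a nonzero real number. A regular curve in $\mathbb H^2$ with constant curvature, not passing through $N$, is an $\alpha$-stationary curve if and only if one of the following holds: (1) it is contained in a geodesic passing through $N$ (this case occurs for every value of $\alpha$); (2) it is contained in a circle of radius $r>0$ centered at $N$ and $\alpha=-r\coth(r)$ (this case occurs for every $r>0$).
   Context: Let $\langle x,y\rangle_\epsilon=x_1y_1+x_2y_2-x_3y_3$ be the Lorentzian inner product on $\mathbb R^3$ and $|x|_\epsilon=\sqrt{|\langle x,x\rangle_\epsilon|}$. The hyperbolic plane is $\mathbb H^2=\{(x,y,z):x^2+y^2-z^2=-1,\ z>0\}$ with the induced metric. It is parametrized by $\Psi(u,v)=(\sinh u\cos v,\sinh u\sin v,\cosh u)$. Let $N=(0,0,1)$. The hyperbolic distance from $\Psi(u,v)$ to $N$ is $u$, and the circle of radius $r$ centered at $N$ is $\{\Psi(r,v):v\in\mathbb R\}$. For a regular curve $\gamma(t)=\Psi(u(t),v(t))$ with $u>0$, we have $|\gamma'|_\epsilon=\sqrt{u'^2+\sinh^2(u)v'^2}$. Its unit normal is $$\mathbf n=\frac{1}{|\gamma'|_\epsilon}\big(u'\sin v+\sinh u\cosh u\,v'\cos v,\ \sinh u\cosh u\,v'\sin v-u'\cos v,\ \sinh^2(u)v'\big).$$ Its (geodesic) curvature is $\kappa=\langle\gamma'',\mathbf n\rangle_\epsilon/|\gamma'|_\epsilon^2$. The energy is $$E_\alpha[\gamma]=\int_\gamma\mathsf d^\alpha ds=\int u^\alpha\sqrt{u'^2+\sinh^2(u)v'^2}\,dt,$$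 where $\mathsf d$ is the distance to $N$. An $\alpha$-stationary curve is a critical point of $E_\alpha$, i.e. $(u,v)$ satisfies its Euler–Lagrange equations. Throughout the paper, $\alpha\neq0$ and curves avoid $N$. *)

theory Defs
  imports "HOL-Analysis.Analysis"
begin

definition lor :: "real \<times> real \<times> real \<Rightarrow> real \<times> real \<times> real \<Rightarrow> real" where
  "lor x y = fst x * fst y + fst (snd x) * fst (snd y) - snd (snd x) * snd (snd y)"

definition H2 :: "(real \<times> real \<times> real) set" where
  "H2 = {(x, y, z). x^2 + y^2 - z^2 = -1 \<and> z > 0}"

definition Npole :: "real \<times> real \<times> real" where
  "Npole = (0, 0, 1)"

definition Psi :: "real \<Rightarrow> real \<Rightarrow> real \<times> real \<times> real" where
  "Psi u v = (sinh u * cos v, sinh u * sin v, cosh u)"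

definition hgeodesic :: "(real \<times> real \<times> real) set \<Rightarrow> bool" where
  "hgeodesic G \<longleftrightarrow> G \<noteq> {} \<and> (\<exists>a b c. (a, b, c) \<noteq> (0, 0, 0) \<and>
      G = {p \<in> H2. a * fst p + b * fst (snd p) + c * snd (snd p) = 0})"

text \<open>Circle of radius r centred at N.\<close>
definition hcircle :: "real \<Rightarrow> (real \<times> real \<times> real) set" where
  "hcircle r = {Psi r v | v. True}"

definition gam :: "(real \<Rightarrow> real) \<Rightarrow> (real \<Rightarrow> real) \<Rightarrow> real \<Rightarrow> real \<times> real \<times> real" where
  "gam u v t = Psi (u t) (v t)"

definition gam1 :: "(real \<Rightarrow> real) \<Rightarrow> (real \<Rightarrow> real) \<Rightarrow> real \<Rightarrow> real" where
  "gam1 u v t = sinh (u t) * cos (v t)"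
definition gam2 :: "(real \<Rightarrow> real) \<Rightarrow> (real \<Rightarrow> real) \<Rightarrow> real \<Rightarrow> real" where
  "gam2 u v t = sinh (u t) * sin (v t)"
definition gam3 :: "(real \<Rightarrow> real) \<Rightarrow> (real \<Rightarrow> real) \<Rightarrow> real \<Rightarrow> real" where
  "gam3 u v t = cosh (u t)"

definition speed :: "(real \<Rightarrow> real) \<Rightarrow> (real \<Rightarrow> real) \<Rightarrow> real \<Rightarrow> real" where
  "speed u v t = sqrt ((deriv u t)^2 + (sinh (u t))^2 * (deriv v t)^2)"

definition gam2nd :: "(real \<Rightarrow> real) \<Rightarrow> (real \<Rightarrow> real) \<Rightarrow> real \<Rightarrow> real \<times> real \<times> real" where
  "gam2nd u v t = (deriv (deriv (gam1 u v)) t, deriv (deriv (gam2 u v)) t, deriv (deriv (gam3 u v)) t)"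

definition unormal :: "(real \<Rightarrow> real) \<Rightarrow> (real \<Rightarrow> real) \<Rightarrow> real \<Rightarrow> real \<times> real \<times> real" where
  "unormal u v t =
     (let u' = deriv u t; v' = deriv v t; s = speed u v t in
      ((u' * sin (v t) + sinh (u t) * cosh (u t) * v' * cos (v t)) / s,
       (sinh (u t) * cosh (u t) * v' * sin (v t) - u' * cos (v t)) / s,
       ((sinh (u t))^2 * v') / s))"

definition curvature :: "(real \<Rightarrow> real) \<Rightarrow> (real \<Rightarrow> real) \<Rightarrow> real \<Rightarrow> real" where
  "curvature u v t = lor (gam2nd u v t) (unormal u v t) / (speed u v t)^2"

definition smooth_on :: "real set \<Rightarrow> (real \<Rightarrow> real) \<Rightarrow> bool" where
  "smooth_on I f \<longleftrightarrow> (\<forall>k. ((deriv ^^ k) f) differentiable_on I)"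

text \<open>A regular smooth curve gamma = Psi(u,v) on an open interval I avoiding N (u > 0).\<close>
definition reg_curve :: "real set \<Rightarrow> (real \<Rightarrow> real) \<Rightarrow> (real \<Rightarrow> real) \<Rightarrow> bool" where
  "reg_curve I u v \<longleftrightarrow> open I \<and> is_interval I \<and> I \<noteq> {} \<and> smooth_on I u \<and> smooth_on I v \<and>
     (\<forall>t\<in>I. u t > 0 \<and> speed u v t > 0)"

definition const_curvature :: "real set \<Rightarrow> (real \<Rightarrow> real) \<Rightarrow> (real \<Rightarrow> real) \<Rightarrow> bool" where
  "const_curvature I u v \<longleftrightarrow> (\<exists>c. \<forall>t\<in>I. curvature u v t = c)"

text \<open>Euler--Lagrange equations of L = u^alpha sqrt(u'^2 + sinh^2(u) v'^2).\<close>
definition stationary :: "real \<Rightarrow> real set \<Rightarrow> (real \<Rightarrow> real) \<Rightarrow> (real \<Rightarrow> real) \<Rightarrow> bool" where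
  "stationary \<alpha> I u v \<longleftrightarrow> (\<forall>t\<in>I.
     deriv (\<lambda>s. u s powr \<alpha> * deriv u s / speed u v s) t =
        \<alpha> * u t powr (\<alpha> - 1) * speed u v t
        + u t powr \<alpha> * sinh (u t) * cosh (u t) * (deriv v t)^2 / speed u v t
   \<and> deriv (\<lambda>s. u s powr \<alpha> * (sinh (u s))^2 * deriv v s / speed u v s) t = 0)"

end

theory Submission
  imports Defs
begin


lemma reg_derivs:
  assumes "reg_curve I u v" "t \<in> I"
  shows "(u has_real_derivative deriv u t) (at t)" "(v has_real_derivative deriv v t) (at t)"
        "(deriv u has_real_derivative deriv (deriv u) t) (at t)"
        "(deriv v has_real_derivative deriv (deriv v) t) (at t)"
proof -
  have o: "open I" and su: "smooth_on I u" and sv: "smooth_on I v" using assms(1) by (auto simp: reg_curve_def)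
  have "((deriv ^^ 0) u) differentiable_on I" "((deriv ^^ 1) u) differentiable_on I"
       "((deriv ^^ 0) v) differentiable_on I" "((deriv ^^ 1) v) differentiable_on I"
    using su sv unfolding smooth_on_def by blast+
  hence "u differentiable (at t)" "deriv u differentiable (at t)" "v differentiable (at t)" "deriv v differentiable (at t)"
    using o assms(2) by (auto simp: differentiable_on_eq_differentiable_at)
  thus "(u has_real_derivative deriv u t) (at t)" "(v has_real_derivative deriv v t) (at t)"
        "(deriv u has_real_derivative deriv (deriv u) t) (at t)"
        "(deriv v has_real_derivative deriv (deriv v) t) (at t)"
    by (auto simp: DERIV_deriv_iff_real_differentiable)
qed

lemma speed_deriv:
  assumes "(u has_real_derivative deriv u t) (at t)" "(v has_real_derivative deriv v t) (at t)"
    "(deriv u has_real_derivative u2) (at t)" "(deriv v has_real_derivative v2) (at t)"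
    "speed u v t > 0"
  shows "(speed u v has_real_derivative
      (deriv u t * u2 + sinh (u t) * cosh (u t) * deriv u t * (deriv v t)^2 + (sinh (u t))^2 * deriv v t * v2) / speed u v t) (at t)"
proof -
  define q where "q = (\<lambda>s. (deriv u s)^2 + (sinh (u s))^2 * (deriv v s)^2)"
  have q: "q t > 0" using assms(5) unfolding speed_def q_def by (metis real_sqrt_gt_0_iff)
  have dq: "(q has_real_derivative
     (2 * deriv u t * u2 + 2 * sinh (u t) * cosh (u t) * deriv u t * (deriv v t)^2 + (sinh (u t))^2 * (2 * deriv v t * v2))) (at t)"
    unfolding q_def
    by (rule derivative_eq_intros refl assms | simp)+
  have "((\<lambda>s. sqrt (q s)) has_real_derivative inverse (sqrt (q t)) / 2 *
     (2 * deriv u t * u2 + 2 * sinh (u t) * cosh (u t) * deriv u t * (deriv v t)^2 + (sinh (u t))^2 * (2 * deriv v t * v2))) (at t)"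
    by (rule DERIV_chain2[OF DERIV_real_sqrt[OF q] dq])
  moreover have "speed u v = (\<lambda>s. sqrt (q s))" unfolding speed_def[abs_def] q_def ..
  moreover have "sqrt (q t) = speed u v t" unfolding speed_def q_def ..
  moreover have "inverse (sqrt (q t)) / 2 *
     (2 * deriv u t * u2 + 2 * sinh (u t) * cosh (u t) * deriv u t * (deriv v t)^2 + (sinh (u t))^2 * (2 * deriv v t * v2))
     = (deriv u t * u2 + sinh (u t) * cosh (u t) * deriv u t * (deriv v t)^2 + (sinh (u t))^2 * deriv v t * v2) / speed u v t"
    unfolding \<open>sqrt (q t) = speed u v t\<close> by (simp add: divide_simps)
  ultimately show ?thesis by metis
qed

lemma alg_curv:
  fixes sh ch c zz U1 U2 V1 V2 :: real
  assumes "zz^2 + c^2 = 1" "ch^2 = sh^2 + 1"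
  shows "(c*(sh*U1^2 + ch*U2 - sh*V1^2) - zz * (2*ch*U1*V1 + sh*V2)) * (U1 * zz + sh*ch*V1*c)
    + (zz * (sh*U1^2 + ch*U2 - sh*V1^2) + c*(2*ch*U1*V1 + sh*V2)) * (sh*ch*V1 * zz - U1*c)
    - (sh*U2 + ch*U1^2)*(sh^2*V1) = sh*U2*V1 - sh*U1*V2 - 2*ch*U1^2*V1 - sh^2*ch*V1^3"
  using assms by algebra

lemma gam_derivs:
  assumes "open I" "t \<in> I"
   "\<And>s. s\<in>I \<Longrightarrow> (u has_real_derivative deriv u s) (at s)"
   "\<And>s. s\<in>I \<Longrightarrow> (v has_real_derivative deriv v s) (at s)"
   "(deriv u has_real_derivative deriv (deriv u) t) (at t)"
   "(deriv v has_real_derivative deriv (deriv v) t) (at t)"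
  shows "gam2nd u v t =
   (cos (v t)*(sinh (u t)*(deriv u t)^2 + cosh (u t)*deriv (deriv u) t - sinh (u t)*(deriv v t)^2)
       - sin (v t)*(2*cosh (u t)*deriv u t*deriv v t + sinh (u t)*deriv (deriv v) t),
    sin (v t)*(sinh (u t)*(deriv u t)^2 + cosh (u t)*deriv (deriv u) t - sinh (u t)*(deriv v t)^2)
       + cos (v t)*(2*cosh (u t)*deriv u t*deriv v t + sinh (u t)*deriv (deriv v) t),
    sinh (u t) * deriv (deriv u) t + cosh (u t) * (deriv u t)^2)"
proof -
  have d1: "deriv (gam1 u v) s = cosh (u s) * deriv u s * cos (v s) - sinh (u s) * sin (v s) * deriv v s"
    if "s \<in> I" for s
  proof (rule DERIV_imp_deriv)
    show "(gam1 u v has_real_derivative cosh (u s) * deriv u s * cos (v s) - sinh (u s) * sin (v s) * deriv v s) (at s)"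
      unfolding gam1_def[abs_def]
      by (rule derivative_eq_intros assms(3,4) that refl)+ (simp add: algebra_simps)
  qed
  have d2: "deriv (gam2 u v) s = cosh (u s) * deriv u s * sin (v s) + sinh (u s) * cos (v s) * deriv v s"
    if "s \<in> I" for s
  proof (rule DERIV_imp_deriv)
    show "(gam2 u v has_real_derivative cosh (u s) * deriv u s * sin (v s) + sinh (u s) * cos (v s) * deriv v s) (at s)"
      unfolding gam2_def[abs_def]
      by (rule derivative_eq_intros assms(3,4) that refl)+ (simp add: algebra_simps)
  qed
  have d3: "deriv (gam3 u v) s = sinh (u s) * deriv u s"
    if "s \<in> I" for s
  proof (rule DERIV_imp_deriv)
    show "(gam3 u v has_real_derivative sinh (u s) * deriv u s) (at s)"
      unfolding gam3_def[abs_def]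
      by (rule derivative_eq_intros assms(3,4) that refl)+
  qed
  have dd1: "((\<lambda>s. cosh (u s) * deriv u s * cos (v s) - sinh (u s) * sin (v s) * deriv v s) has_real_derivative
     cos (v t)*(sinh (u t)*(deriv u t)^2 + cosh (u t)*deriv (deriv u) t - sinh (u t)*(deriv v t)^2)
       - sin (v t)*(2*cosh (u t)*deriv u t*deriv v t + sinh (u t)*deriv (deriv v) t)) (at t)"
    by (rule derivative_eq_intros assms(3,4,5,6) assms(2) refl)+ (simp add: algebra_simps power2_eq_square)
  have dd2: "((\<lambda>s. cosh (u s) * deriv u s * sin (v s) + sinh (u s) * cos (v s) * deriv v s) has_real_derivative
    sin (v t)*(sinh (u t)*(deriv u t)^2 + cosh (u t)*deriv (deriv u) t - sinh (u t)*(deriv v t)^2)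
       + cos (v t)*(2*cosh (u t)*deriv u t*deriv v t + sinh (u t)*deriv (deriv v) t)) (at t)"
    by (rule derivative_eq_intros assms(3,4,5,6) assms(2) refl)+ (simp add: algebra_simps power2_eq_square)
  have dd3: "((\<lambda>s. sinh (u s) * deriv u s) has_real_derivative
    sinh (u t) * deriv (deriv u) t + cosh (u t) * (deriv u t)^2) (at t)"
    by (rule derivative_eq_intros assms(3,4,5,6) assms(2) refl)+ (simp add: algebra_simps power2_eq_square)
  have e1: "deriv (deriv (gam1 u v)) t = cos (v t)*(sinh (u t)*(deriv u t)^2 + cosh (u t)*deriv (deriv u) t - sinh (u t)*(deriv v t)^2)
       - sin (v t)*(2*cosh (u t)*deriv u t*deriv v t + sinh (u t)*deriv (deriv v) t)"
    by (rule DERIV_imp_deriv, rule has_field_derivative_transform_within_open[OF dd1 assms(1,2)]) (simp add: d1)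
  have e2: "deriv (deriv (gam2 u v)) t = sin (v t)*(sinh (u t)*(deriv u t)^2 + cosh (u t)*deriv (deriv u) t - sinh (u t)*(deriv v t)^2)
       + cos (v t)*(2*cosh (u t)*deriv u t*deriv v t + sinh (u t)*deriv (deriv v) t)"
    by (rule DERIV_imp_deriv, rule has_field_derivative_transform_within_open[OF dd2 assms(1,2)]) (simp add: d2)
  have e3: "deriv (deriv (gam3 u v)) t = sinh (u t) * deriv (deriv u) t + cosh (u t) * (deriv u t)^2"
    by (rule DERIV_imp_deriv, rule has_field_derivative_transform_within_open[OF dd3 assms(1,2)]) (simp add: d3)
  show ?thesis unfolding gam2nd_def e1 e2 e3 ..
qed

lemma curv_formula:
  assumes "open I" "t \<in> I"
   "\<And>s. s\<in>I \<Longrightarrow> (u has_real_derivative deriv u s) (at s)"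
   "\<And>s. s\<in>I \<Longrightarrow> (v has_real_derivative deriv v s) (at s)"
   "(deriv u has_real_derivative deriv (deriv u) t) (at t)"
   "(deriv v has_real_derivative deriv (deriv v) t) (at t)"
   "speed u v t > 0"
  shows "curvature u v t = (sinh (u t) * deriv (deriv u) t * deriv v t - sinh (u t) * deriv u t * deriv (deriv v) t
      - 2 * cosh (u t) * (deriv u t)^2 * deriv v t - (sinh (u t))^2 * cosh (u t) * (deriv v t)^3) / (speed u v t)^3"
proof -
  have a: "sin (v t)^2 + cos (v t)^2 = 1" by simp
  have b: "cosh (u t)^2 = sinh (u t)^2 + 1" by (rule cosh_square_eq)
  have s: "speed u v t \<noteq> 0" using assms(7) by simp
  define A1 where "A1 = cos (v t)*(sinh (u t)*(deriv u t)^2 + cosh (u t)*deriv (deriv u) t - sinh (u t)*(deriv v t)^2)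
       - sin (v t)*(2*cosh (u t)*deriv u t*deriv v t + sinh (u t)*deriv (deriv v) t)"
  define A2 where "A2 = sin (v t)*(sinh (u t)*(deriv u t)^2 + cosh (u t)*deriv (deriv u) t - sinh (u t)*(deriv v t)^2)
       + cos (v t)*(2*cosh (u t)*deriv u t*deriv v t + sinh (u t)*deriv (deriv v) t)"
  define A3 where "A3 = sinh (u t) * deriv (deriv u) t + cosh (u t) * (deriv u t)^2"
  define N1 where "N1 = deriv u t * sin (v t) + sinh (u t) * cosh (u t) * deriv v t * cos (v t)"
  define N2 where "N2 = sinh (u t) * cosh (u t) * deriv v t * sin (v t) - deriv u t * cos (v t)"
  define N3 where "N3 = (sinh (u t))^2 * deriv v t"
  have G: "gam2nd u v t = (A1, A2, A3)" using gam_derivs[OF assms(1-6)] unfolding A1_def A2_def A3_def .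
  have N: "unormal u v t = (N1 / speed u v t, N2 / speed u v t, N3 / speed u v t)"
    unfolding unormal_def Let_def N1_def N2_def N3_def ..
  have L: "lor (gam2nd u v t) (unormal u v t) = (A1 * N1 + A2 * N2 - A3 * N3) / speed u v t"
    unfolding G N lor_def fst_conv snd_conv
    using s by (simp add: field_simps)
  have K: "A1 * N1 + A2 * N2 - A3 * N3 = sinh (u t) * deriv (deriv u) t * deriv v t - sinh (u t) * deriv u t * deriv (deriv v) t
      - 2 * cosh (u t) * (deriv u t)^2 * deriv v t - (sinh (u t))^2 * cosh (u t) * (deriv v t)^3"
    unfolding A1_def A2_def A3_def N1_def N2_def N3_def
    using alg_curv[OF a b, of "deriv u t" "deriv (deriv u) t" "deriv v t" "deriv (deriv v) t"]
    by (simp add: algebra_simps)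
  show ?thesis unfolding curvature_def L K using s by (simp add: power3_eq_cube power2_eq_square)
qed



lemma alg_el1:
  fixes A u S P Q Ua Ub Va Vb a :: real
  assumes "A>0" "u>0" "S>0" "S^2 = Ua^2 + P^2*Va^2"
  shows "((a*(A/u)*Ua*Ua + Ub*A)*S - A*Ua*((Ua*Ub + P*Q*Ua*Va^2 + P^2*Va*Vb)/S))/(S*S) - (a*(A/u)*S + A*P*Q*Va^2/S)
   = A*P*Va*(((P*Ub*Va - P*Ua*Vb - 2*Q*Ua^2*Va - P^2*Q*Va^3)/S^3)*S*u - a*P*Va)/(u*S)"
proof -
  have "S \<noteq> 0" "u \<noteq> 0" using assms by auto
  have L: "((a*(A/u)*Ua*Ua + Ub*A)*S - A*Ua*((Ua*Ub + P*Q*Ua*Va^2 + P^2*Va*Vb)/S))/(S*S) - (a*(A/u)*S + A*P*Q*Va^2/S)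
     = ((a*A*Ua^2 + Ub*A*u)*S^2 - A*Ua*u*(Ua*Ub + P*Q*Ua*Va^2 + P^2*Va*Vb) - a*A*S^2*S^2 - A*P*Q*Va^2*u*S^2)/(u*S^3)"
    using \<open>S \<noteq> 0\<close> \<open>u \<noteq> 0\<close> by (simp add: field_simps power2_eq_square power3_eq_cube)
  have R: "A*P*Va*(((P*Ub*Va - P*Ua*Vb - 2*Q*Ua^2*Va - P^2*Q*Va^3)/S^3)*S*u - a*P*Va)/(u*S)
     = A*P*Va*((P*Ub*Va - P*Ua*Vb - 2*Q*Ua^2*Va - P^2*Q*Va^3)*u - a*P*Va*S^2)/(u*S^3)"
    using \<open>S \<noteq> 0\<close> \<open>u \<noteq> 0\<close> by (simp add: field_simps power2_eq_square power3_eq_cube)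
  have M: "(a*A*Ua^2 + Ub*A*u)*S^2 - A*Ua*u*(Ua*Ub + P*Q*Ua*Va^2 + P^2*Va*Vb) - a*A*S^2*S^2 - A*P*Q*Va^2*u*S^2
     = A*P*Va*((P*Ub*Va - P*Ua*Vb - 2*Q*Ua^2*Va - P^2*Q*Va^3)*u - a*P*Va*S^2)"
    unfolding assms(4) by algebra
  show ?thesis unfolding L R M ..
qed

lemma alg_el2:
  fixes A u S P Q Ua Ub Va Vb a :: real
  assumes "A>0" "u>0" "S>0" "S^2 = Ua^2 + P^2*Va^2"
  shows "(((a*(A/u)*Ua*P^2 + A*(2*P*Q*Ua))*Va + A*P^2*Vb)*S - A*P^2*Va*((Ua*Ub + P*Q*Ua*Va^2 + P^2*Va*Vb)/S))/(S*S)
   = - A*P*Ua*(((P*Ub*Va - P*Ua*Vb - 2*Q*Ua^2*Va - P^2*Q*Va^3)/S^3)*S*u - a*P*Va)/(u*S)"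
proof -
  have "S \<noteq> 0" "u \<noteq> 0" using assms by auto
  have L: "(((a*(A/u)*Ua*P^2 + A*(2*P*Q*Ua))*Va + A*P^2*Vb)*S - A*P^2*Va*((Ua*Ub + P*Q*Ua*Va^2 + P^2*Va*Vb)/S))/(S*S)
     = ((a*A*Ua*P^2*Va + 2*A*P*Q*Ua*Va*u + A*P^2*Vb*u)*S^2 - A*P^2*Va*u*(Ua*Ub + P*Q*Ua*Va^2 + P^2*Va*Vb))/(u*S^3)"
    using \<open>S \<noteq> 0\<close> \<open>u \<noteq> 0\<close> by (simp add: field_simps power2_eq_square power3_eq_cube)
  have R: "- A*P*Ua*(((P*Ub*Va - P*Ua*Vb - 2*Q*Ua^2*Va - P^2*Q*Va^3)/S^3)*S*u - a*P*Va)/(u*S)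
     = - A*P*Ua*((P*Ub*Va - P*Ua*Vb - 2*Q*Ua^2*Va - P^2*Q*Va^3)*u - a*P*Va*S^2)/(u*S^3)"
    using \<open>S \<noteq> 0\<close> \<open>u \<noteq> 0\<close> by (simp add: field_simps power2_eq_square power3_eq_cube)
  have M: "(a*A*Ua*P^2*Va + 2*A*P*Q*Ua*Va*u + A*P^2*Vb*u)*S^2 - A*P^2*Va*u*(Ua*Ub + P*Q*Ua*Va^2 + P^2*Va*Vb)
     = - A*P*Ua*((P*Ub*Va - P*Ua*Vb - 2*Q*Ua^2*Va - P^2*Q*Va^3)*u - a*P*Va*S^2)"
    unfolding assms(4) by algebra
  show ?thesis unfolding L R M ..
qed



lemma EL_iff:
  fixes \<alpha> :: real
  assumes "reg_curve I u v" "t \<in> I"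
  defines "X \<equiv> curvature u v t * speed u v t * u t - \<alpha> * sinh (u t) * deriv v t"
  shows "deriv (\<lambda>s. u s powr \<alpha> * deriv u s / speed u v s) t =
        \<alpha> * u t powr (\<alpha> - 1) * speed u v t
        + u t powr \<alpha> * sinh (u t) * cosh (u t) * (deriv v t)^2 / speed u v t
     \<longleftrightarrow> sinh (u t) * deriv v t * X = 0"
    and "deriv (\<lambda>s. u s powr \<alpha> * (sinh (u s))^2 * deriv v s / speed u v s) t = 0
     \<longleftrightarrow> deriv u t * X = 0"
proof -
  have o: "open I" using assms(1) by (simp add: reg_curve_def)
  have ds: "\<And>s. s \<in> I \<Longrightarrow> (u has_real_derivative deriv u s) (at s)"
           "\<And>s. s \<in> I \<Longrightarrow> (v has_real_derivative deriv v s) (at s)"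
    using reg_derivs[OF assms(1)] by blast+
  note d = reg_derivs[OF assms(1,2)]
  have ut: "u t > 0" and S: "speed u v t > 0" using assms(1,2) by (auto simp: reg_curve_def)
  define A where "A = u t powr \<alpha>"
  define S where "S = speed u v t"
  define U1 where "U1 = deriv u t"
  define U2 where "U2 = deriv (deriv u) t"
  define V1 where "V1 = deriv v t"
  define V2 where "V2 = deriv (deriv v) t"
  define P where "P = sinh (u t)"
  define Q where "Q = cosh (u t)"
  have A: "A > 0" unfolding A_def using ut by simp
  have Am: "u t powr (\<alpha> - 1) = A / u t" unfolding A_def using ut by (simp add: powr_diff)
  have SS: "S^2 = U1^2 + P^2*V1^2" unfolding S_def speed_def U1_def V1_def P_def
    by (simp add: add_nonneg_nonneg)
  have K: "curvature u v t = (P*U2*V1 - P*U1*V2 - 2*Q*U1^2*V1 - P^2*Q*V1^3)/S^3"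
    by (subst curv_formula[OF o assms(2) ds d(3,4) S]) (simp_all add: P_def U1_def U2_def V1_def V2_def Q_def S_def)
  have X: "X = ((P*U2*V1 - P*U1*V2 - 2*Q*U1^2*V1 - P^2*Q*V1^3)/S^3)*S*u t - \<alpha>*P*V1"
    unfolding X_def K by (simp add: S_def P_def V1_def)
  have Sd: "(speed u v has_real_derivative (U1*U2 + P*Q*U1*V1^2 + P^2*V1*V2)/S) (at t)"
    using speed_deriv[OF d S] unfolding U1_def U2_def V1_def V2_def P_def Q_def S_def
    by (simp add: algebra_simps)
  have pw: "((\<lambda>s. u s powr \<alpha>) has_real_derivative \<alpha>*(A/u t)*U1) (at t)"
    using DERIV_fun_powr[OF d(1) ut, of \<alpha>] Am unfolding U1_def by simp
  have D1: "((\<lambda>s. u s powr \<alpha> * deriv u s / speed u v s) has_real_derivative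
      ((\<alpha>*(A/u t)*U1*U1 + U2*A)*S - A*U1*((U1*U2 + P*Q*U1*V1^2 + P^2*V1*V2)/S))/(S*S)) (at t)"
    using DERIV_divide[OF DERIV_mult[OF pw d(3)] Sd] S
    unfolding A_def U1_def U2_def S_def by simp
  have sh2: "((\<lambda>s. (sinh (u s))^2) has_real_derivative 2*P*Q*U1) (at t)"
    unfolding P_def Q_def U1_def by (rule derivative_eq_intros d refl)+ simp
  have D2': "((\<lambda>s. u s powr \<alpha> * (sinh (u s))^2 * deriv v s / speed u v s) has_real_derivative
      (((\<alpha>*(A/u t)*U1 * (sinh (u t))^2 + 2*P*Q*U1 * u t powr \<alpha>) * deriv v t + deriv (deriv v) t * (u t powr \<alpha> * (sinh (u t))^2))
       * speed u v t - (u t powr \<alpha> * (sinh (u t))^2 * deriv v t) * ((U1*U2 + P*Q*U1*V1^2 + P^2*V1*V2)/S))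
       / (speed u v t * speed u v t)) (at t)"
    by (rule DERIV_divide[OF DERIV_mult[OF DERIV_mult[OF pw sh2] d(4)] Sd]) (use S in simp)
  have E2: "(((\<alpha>*(A/u t)*U1 * (sinh (u t))^2 + 2*P*Q*U1 * u t powr \<alpha>) * deriv v t + deriv (deriv v) t * (u t powr \<alpha> * (sinh (u t))^2))
       * speed u v t - (u t powr \<alpha> * (sinh (u t))^2 * deriv v t) * ((U1*U2 + P*Q*U1*V1^2 + P^2*V1*V2)/S))
       / (speed u v t * speed u v t) = 
      (((\<alpha>*(A/u t)*U1*P^2 + A*(2*P*Q*U1))*V1 + A*P^2*V2)*S - A*P^2*V1*((U1*U2 + P*Q*U1*V1^2 + P^2*V1*V2)/S))/(S*S)"
    unfolding A_def[symmetric] P_def[symmetric] S_def[symmetric] V1_def[symmetric] V2_def[symmetric]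
    by (simp add: algebra_simps)
  have D2: "((\<lambda>s. u s powr \<alpha> * (sinh (u s))^2 * deriv v s / speed u v s) has_real_derivative
      (((\<alpha>*(A/u t)*U1*P^2 + A*(2*P*Q*U1))*V1 + A*P^2*V2)*S - A*P^2*V1*((U1*U2 + P*Q*U1*V1^2 + P^2*V1*V2)/S))/(S*S)) (at t)"
    using D2' unfolding E2 .
  have nz: "A \<noteq> 0" "u t \<noteq> 0" "S \<noteq> 0" using A ut S by (auto simp: S_def)
  show "deriv (\<lambda>s. u s powr \<alpha> * deriv u s / speed u v s) t =
        \<alpha> * u t powr (\<alpha> - 1) * speed u v t
        + u t powr \<alpha> * sinh (u t) * cosh (u t) * (deriv v t)^2 / speed u v t
     \<longleftrightarrow> sinh (u t) * deriv v t * X = 0"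
  proof -
    have "deriv (\<lambda>s. u s powr \<alpha> * deriv u s / speed u v s) t - (\<alpha> * u t powr (\<alpha> - 1) * speed u v t
        + u t powr \<alpha> * sinh (u t) * cosh (u t) * (deriv v t)^2 / speed u v t)
       = A*P*V1*X/(u t*S)" (is "?L - ?R = ?E")
      unfolding DERIV_imp_deriv[OF D1] Am X
      using alg_el1[where Q=Q and Ub=U2 and Vb=V2 and a=\<alpha>, OF A ut _ SS] S
      by (simp add: A_def S_def P_def Q_def V1_def)
    moreover have "?L = ?R \<longleftrightarrow> ?L - ?R = 0" by (rule right_minus_eq[symmetric])
    ultimately have "?L = ?R \<longleftrightarrow> ?E = 0" by (simp only:)
    moreover have "?E = 0 \<longleftrightarrow> sinh (u t) * deriv v t * X = 0" using nz ut by (simp add: P_def V1_def)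
    ultimately show ?thesis by blast
  qed
  show "deriv (\<lambda>s. u s powr \<alpha> * (sinh (u s))^2 * deriv v s / speed u v s) t = 0
     \<longleftrightarrow> deriv u t * X = 0"
  proof -
    have "deriv (\<lambda>s. u s powr \<alpha> * (sinh (u s))^2 * deriv v s / speed u v s) t
       = - A*P*U1*X/(u t*S)"
      unfolding DERIV_imp_deriv[OF D2] X
      using alg_el2[where Q=Q and Ub=U2 and Vb=V2 and a=\<alpha>, OF A ut _ SS] S
      by (simp add: S_def)
    moreover have "- A*P*U1*X/(u t*S) = 0 \<longleftrightarrow> deriv u t * X = 0" using nz ut by (simp add: P_def U1_def)
    ultimately show ?thesis by (simp only:)
  qed
qed



lemma deriv_loc_const:
  fixes f :: "real \<Rightarrow> real"
  assumes "open I" "t \<in> I" "\<And>s. s \<in> I \<Longrightarrow> f s = c"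
  shows "deriv f t = 0"
proof -
  have "(f has_real_derivative 0) (at t)"
    by (rule has_field_derivative_transform_within_open[OF DERIV_const assms(1,2)]) (simp add: assms(3))
  thus ?thesis by (rule DERIV_imp_deriv)
qed

lemma zero_deriv_const:
  fixes f :: "real \<Rightarrow> real"
  assumes "is_interval I" "\<And>s. s \<in> I \<Longrightarrow> (f has_real_derivative 0) (at s)" "t0 \<in> I" "t \<in> I"
  shows "f t = f t0"
proof -
  have "convex I" using assms(1) by (simp add: is_interval_convex)
  have "\<exists>c. \<forall>x\<in>I. f x = c"
    by (rule has_field_derivative_zero_constant[OF \<open>convex I\<close>]) (use assms(2) has_field_derivative_at_within in blast)
  thus ?thesis using assms(3,4) by auto
qed

lemma reg_facts:
  assumes "reg_curve I u v" "t \<in> I"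
  shows "open I" "is_interval I" "u t > 0" "speed u v t > 0"
    "curvature u v t = (sinh (u t) * deriv (deriv u) t * deriv v t - sinh (u t) * deriv u t * deriv (deriv v) t
      - 2 * cosh (u t) * (deriv u t)^2 * deriv v t - (sinh (u t))^2 * cosh (u t) * (deriv v t)^3) / (speed u v t)^3"
    "(speed u v t)^2 = (deriv u t)^2 + (sinh (u t))^2 * (deriv v t)^2"
proof -
  show o: "open I" "is_interval I" "u t > 0" and S: "speed u v t > 0" using assms by (auto simp: reg_curve_def)
  have ds: "\<And>s. s \<in> I \<Longrightarrow> (u has_real_derivative deriv u s) (at s)"
           "\<And>s. s \<in> I \<Longrightarrow> (v has_real_derivative deriv v s) (at s)"
    using reg_derivs[OF assms(1)] by blast+
  note d = reg_derivs[OF assms(1,2)]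
  show "curvature u v t = (sinh (u t) * deriv (deriv u) t * deriv v t - sinh (u t) * deriv u t * deriv (deriv v) t
      - 2 * cosh (u t) * (deriv u t)^2 * deriv v t - (sinh (u t))^2 * cosh (u t) * (deriv v t)^3) / (speed u v t)^3"
    by (rule curv_formula[OF o(1) assms(2) ds d(3,4) S]) auto
  show "(speed u v t)^2 = (deriv u t)^2 + (sinh (u t))^2 * (deriv v t)^2"
    unfolding speed_def by (simp add: add_nonneg_nonneg)
qed

lemma stat_of_X:
  fixes \<alpha> :: real
  assumes "reg_curve I u v"
    "\<And>t. t \<in> I \<Longrightarrow> curvature u v t * speed u v t * u t - \<alpha> * sinh (u t) * deriv v t = 0"
  shows "stationary \<alpha> I u v"
  unfolding stationary_def
  using EL_iff[OF assms(1), of _ \<alpha>] assms(2) by simp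

lemma X_of_stat:
  fixes \<alpha> :: real
  assumes "reg_curve I u v" "stationary \<alpha> I u v" "t \<in> I"
  shows "curvature u v t * speed u v t * u t - \<alpha> * sinh (u t) * deriv v t = 0"
proof -
  have "sinh (u t) * deriv v t * (curvature u v t * speed u v t * u t - \<alpha> * sinh (u t) * deriv v t) = 0"
       "deriv u t * (curvature u v t * speed u v t * u t - \<alpha> * sinh (u t) * deriv v t) = 0"
    using EL_iff[OF assms(1,3), of \<alpha>] assms(2,3) unfolding stationary_def by auto
  moreover have "sinh (u t) * deriv v t \<noteq> 0 \<or> deriv u t \<noteq> 0"
    using reg_facts(4,6)[OF assms(1,3)] by (auto simp: power2_eq_square)
  ultimately show ?thesis by auto
qed



lemma geo_stat:
  fixes \<alpha> :: real
  assumes "reg_curve I u v" "hgeodesic G" "Npole \<in> G" "gam u v ` I \<subseteq> G"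
  shows "stationary \<alpha> I u v"
proof (rule stat_of_X[OF assms(1)])
  obtain a b c where abc: "(a,b,c) \<noteq> (0,0,0)" and G: "G = {p\<in>H2. a*fst p + b*fst(snd p) + c * snd(snd p) = 0}"
    using assms(2) unfolding hgeodesic_def by blast
  have c: "c = 0" using assms(3) unfolding G Npole_def by simp
  have ab: "a \<noteq> 0 \<or> b \<noteq> 0" using abc c by auto
  have o: "open I" using assms(1) by (simp add: reg_curve_def)
  have h: "a * cos (v s) + b * sin (v s) = 0" if "s \<in> I" for s
  proof -
    have "gam u v s \<in> G" using assms(4) that by blast
    hence "sinh (u s) * (a * cos (v s) + b * sin (v s)) = 0"
      unfolding G gam_def Psi_def c by (simp add: algebra_simps)
    moreover have "u s > 0" using assms(1) that by (simp add: reg_curve_def)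
    ultimately show ?thesis by simp
  qed
  have V1: "deriv v t = 0" if "t \<in> I" for t
  proof (rule ccontr)
    assume nz: "deriv v t \<noteq> 0"
    note d = reg_derivs[OF assms(1) that]
    have D: "((\<lambda>s. a * cos (v s) + b * sin (v s)) has_real_derivative (- a * sin (v t) + b * cos (v t)) * deriv v t) (at t)"
      by (rule derivative_eq_intros d refl)+ (simp add: algebra_simps)
    have D0: "((\<lambda>s. a * cos (v s) + b * sin (v s)) has_real_derivative 0) (at t)"
      by (rule has_field_derivative_transform_within_open[OF DERIV_const o that]) (simp add: h)
    have "(- a * sin (v t) + b * cos (v t)) * deriv v t = 0" using DERIV_unique[OF D D0] .
    hence e2: "- a * sin (v t) + b * cos (v t) = 0" using nz by simp
    have e1: "a * cos (v t) + b * sin (v t) = 0" using h that .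
    have sc: "sin (v t)^2 + cos (v t)^2 = 1" by simp
    have "a = cos (v t) * (a * cos (v t) + b * sin (v t)) - sin (v t) * (- a * sin (v t) + b * cos (v t))"
      using sc by algebra
    moreover have "b = sin (v t) * (a * cos (v t) + b * sin (v t)) + cos (v t) * (- a * sin (v t) + b * cos (v t))"
      using sc by algebra
    ultimately have "a = 0" "b = 0" using e1 e2 by simp_all
    thus False using ab by simp
  qed
  fix t assume t: "t \<in> I"
  have V2: "deriv (deriv v) t = 0" by (rule deriv_loc_const[OF o t V1])
  show "curvature u v t * speed u v t * u t - \<alpha> * sinh (u t) * deriv v t = 0"
    unfolding reg_facts(5)[OF assms(1) t] V1[OF t] V2 by simp
qed

lemma circ_stat:
  assumes "reg_curve I u v" "r > 0" "gam u v ` I \<subseteq> hcircle r" "\<alpha> = - r * cosh r / sinh r"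
  shows "stationary \<alpha> I u v"
proof (rule stat_of_X[OF assms(1)])
  have o: "open I" using assms(1) by (simp add: reg_curve_def)
  have ur: "u s = r" if "s \<in> I" for s
  proof -
    have "gam u v s \<in> hcircle r" using assms(3) that by blast
    then obtain w where "Psi (u s) (v s) = Psi r w" unfolding hcircle_def gam_def by blast
    hence "cosh (u s) = cosh r" unfolding Psi_def by simp
    moreover have "u s > 0" using assms(1) that by (simp add: reg_curve_def)
    ultimately show ?thesis using assms(2) by simp
  qed
  have U1: "deriv u t = 0" if "t \<in> I" for t by (rule deriv_loc_const[OF o that ur])
  fix t assume t: "t \<in> I"
  have U2: "deriv (deriv u) t = 0" by (rule deriv_loc_const[OF o t U1])
  have S: "speed u v t > 0" using assms(1) t by (simp add: reg_curve_def)
  have SS: "(speed u v t)^2 = (sinh r)^2 * (deriv v t)^2" using reg_facts(6)[OF assms(1) t] U1[OF t] ur[OF t] by simp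
  have shr: "sinh r > 0" using assms(2) by simp
  have "curvature u v t * speed u v t = - cosh r * deriv v t"
  proof -
    have "curvature u v t * speed u v t = - (sinh r * sinh r * cosh r * (deriv v t)^3) / (speed u v t)^2"
      unfolding reg_facts(5)[OF assms(1) t] U1[OF t] U2 ur[OF t] using S
      by (simp add: power3_eq_cube power2_eq_square)
    also have "\<dots> = - cosh r * deriv v t"
    proof -
      have "deriv v t \<noteq> 0" using SS S by auto
      thus ?thesis unfolding SS using shr by (simp add: power3_eq_cube power2_eq_square)
    qed
    finally show ?thesis .
  qed
  thus "curvature u v t * speed u v t * u t - \<alpha> * sinh (u t) * deriv v t = 0"
    unfolding ur[OF t] assms(4) using shr by (simp add: field_simps)
qed



lemma shch_gt:
  fixes x :: real
  assumes "x > 0"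
  shows "sinh x * cosh x > x"
proof -
  have "\<exists>z. 0 < z \<and> z < x \<and> ((sinh x * cosh x - x) - (sinh 0 * cosh 0 - 0) = (x - 0) * (cosh z * cosh z + sinh z * sinh z - 1))"
    by (rule MVT2[OF assms]) (rule derivative_eq_intros refl | simp)+
  then obtain z where z: "0 < z" "sinh x * cosh x - x = x * (cosh z * cosh z + sinh z * sinh z - 1)" by auto
  have "cosh z * cosh z + sinh z * sinh z - 1 = 2 * (sinh z)^2" using cosh_square_eq[of z] by (simp add: power2_eq_square)
  moreover have "sinh z > 0" using z by simp
  ultimately have "cosh z * cosh z + sinh z * sinh z - 1 > 0" by simp
  thus ?thesis using z assms by (smt (verit) mult_pos_pos)
qed

lemma w_deriv:
  fixes x c :: real
  assumes "x > 0"
  shows "((\<lambda>y. y * cosh y / sinh y) has_real_derivative (sinh x * cosh x - x)/(sinh x)^2) (at x)"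
proof -
  have s: "sinh x \<noteq> 0" using assms by simp
  show ?thesis
    apply (rule derivative_eq_intros refl)+
    using s cosh_square_eq[of x] by (simp_all add: field_simps power2_eq_square)
qed

lemma deriv_zero_from_w:
  fixes u :: "real \<Rightarrow> real" and c :: real
  assumes o: "open I" and du: "\<And>t. t \<in> I \<Longrightarrow> (u has_real_derivative deriv u t) (at t)"
    and cont: "\<And>t. t \<in> I \<Longrightarrow> isCont (deriv u) t" and pos: "\<And>t. t \<in> I \<Longrightarrow> u t > 0"
    and w: "\<And>t. t \<in> I \<Longrightarrow> deriv u t * (c + u t * cosh (u t) / sinh (u t)) = 0" and t0: "t0 \<in> I"
  shows "deriv u t0 = 0"
proof (rule ccontr)
  assume nz: "deriv u t0 \<noteq> 0"
  obtain e1 where e1: "e1 > 0" "\<And>y. dist t0 y < e1 \<Longrightarrow> deriv u y \<noteq> 0"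
    using continuous_at_avoid[OF cont[OF t0] nz] by blast
  obtain e2 where e2: "e2 > 0" "ball t0 e2 \<subseteq> I" using o t0 openE by blast
  define B where "B = ball t0 (min e1 e2)"
  have B: "open B" "t0 \<in> B" "B \<subseteq> I" using e1 e2 by (auto simp: B_def)
  have wB: "u s * cosh (u s) / sinh (u s) = - c" if "s \<in> B" for s
  proof -
    have "deriv u s \<noteq> 0" using e1(2)[of s] that by (auto simp: B_def)
    thus ?thesis using w[of s] B(3) that by (auto simp: add_eq_0_iff)
  qed
  have D0: "((\<lambda>s. u s * cosh (u s) / sinh (u s)) has_real_derivative 0) (at t0)"
    by (rule has_field_derivative_transform_within_open[OF DERIV_const B(1,2)]) (simp add: wB)
  have D1: "((\<lambda>s. u s * cosh (u s) / sinh (u s)) has_real_derivative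
       (sinh (u t0) * cosh (u t0) - u t0)/(sinh (u t0))^2 * deriv u t0) (at t0)"
    using DERIV_chain2[OF w_deriv[OF pos[OF t0]] du[OF t0]] .
  have "(sinh (u t0) * cosh (u t0) - u t0)/(sinh (u t0))^2 * deriv u t0 = 0"
    using DERIV_unique[OF D1 D0] .
  moreover have "(sinh (u t0) * cosh (u t0) - u t0)/(sinh (u t0))^2 > 0"
    using shch_gt[OF pos[OF t0]] pos[OF t0] by simp
  ultimately show False using nz by (metis less_irrefl mult_eq_0_iff)
qed



lemma stat_classify:
  fixes \<alpha> :: real
  assumes a0: "\<alpha> \<noteq> 0" and rc: "reg_curve I u v" and cc: "const_curvature I u v" and st: "stationary \<alpha> I u v"
  shows "(\<exists>G. hgeodesic G \<and> Npole \<in> G \<and> gam u v ` I \<subseteq> G) \<or>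
         (\<exists>r>0. gam u v ` I \<subseteq> hcircle r \<and> \<alpha> = - r * cosh r / sinh r)"
proof -
  obtain k where k: "\<And>t. t \<in> I \<Longrightarrow> curvature u v t = k" using cc unfolding const_curvature_def by blast
  have o: "open I" and iv: "is_interval I" and ne: "I \<noteq> {}" using rc by (auto simp: reg_curve_def)
  then obtain t0 where t0: "t0 \<in> I" by blast
  have pos: "\<And>t. t \<in> I \<Longrightarrow> u t > 0" and S: "\<And>t. t \<in> I \<Longrightarrow> speed u v t > 0"
    using rc by (auto simp: reg_curve_def)
  have X: "k * speed u v t * u t = \<alpha> * sinh (u t) * deriv v t" if "t \<in> I" for t
    using X_of_stat[OF rc st that] k[OF that] by simp
  show ?thesis
  proof (cases "k = 0")
    case True
    have V1: "deriv v t = 0" if "t \<in> I" for t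
      using X[OF that] True a0 pos[OF that] by simp
    have vc: "v t = v t0" if "t \<in> I" for t
      by (rule zero_deriv_const[OF iv _ t0 that]) (use reg_derivs(2)[OF rc] V1 in auto)
    define c0 where "c0 = v t0"
    define G where "G = {p\<in>H2. sin c0 * fst p + (- cos c0) * fst (snd p) + 0 * snd (snd p) = 0}"
    have N: "Npole \<in> G" unfolding G_def Npole_def H2_def by simp
    have "(sin c0, - cos c0, 0::real) \<noteq> (0,0,0)"
    proof
      assume "(sin c0, - cos c0, 0::real) = (0,0,0)"
      hence "sin c0 = 0" "cos c0 = 0" by auto
      thus False using sin_cos_squared_add[of c0] by simp
    qed
    hence "hgeodesic G" unfolding hgeodesic_def using N G_def by blast
    moreover have "gam u v ` I \<subseteq> G"
    proof
      fix p assume "p \<in> gam u v ` I"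
      then obtain t where t: "t \<in> I" "p = gam u v t" by blast
      have "(sinh (u t) * cos c0)^2 + (sinh (u t) * sin c0)^2 - (cosh (u t))^2 = -1"
        using sin_cos_squared_add[of c0] cosh_square_eq[of "u t"] by algebra
      thus "p \<in> G" unfolding t G_def H2_def gam_def Psi_def vc[OF t(1)] c0_def[symmetric]
        by (simp add: algebra_simps)
    qed
    ultimately show ?thesis using N by blast
  next
    case False
    define g where "g = (\<lambda>s. u s powr \<alpha> * (sinh (u s))^2 * deriv v s / speed u v s)"
    have gF: "g s = (k/\<alpha>) * (u s powr (\<alpha> + 1) * sinh (u s))" if "s \<in> I" for s
    proof -
      have "sinh (u s) * deriv v s = k * speed u v s * u s / \<alpha>" using X[OF that] a0 by (simp add: field_simps)
      moreover have "u s powr (\<alpha> + 1) = u s powr \<alpha> * u s" using pos[OF that] by (simp add: powr_add)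
      ultimately show ?thesis unfolding g_def using S[OF that] a0
        by (simp add: field_simps power2_eq_square)
    qed
    have w: "deriv u t * ((\<alpha> + 1) + u t * cosh (u t) / sinh (u t)) = 0" if t: "t \<in> I" for t
    proof -
      note d = reg_derivs[OF rc t]
      have DF: "((\<lambda>s. (k/\<alpha>) * (u s powr (\<alpha> + 1) * sinh (u s))) has_real_derivative
          (k/\<alpha>) * ((\<alpha> + 1) * u t powr (\<alpha> + 1 - of_nat 1) * deriv u t * sinh (u t) + cosh (u t) * deriv u t * u t powr (\<alpha> + 1))) (at t)"
        by (rule DERIV_cmult DERIV_mult DERIV_fun_powr[OF d(1) pos[OF t]] derivative_intros d(1))+
      hence Dg: "(g has_real_derivative
          (k/\<alpha>) * ((\<alpha> + 1) * u t powr (\<alpha> + 1 - of_nat 1) * deriv u t * sinh (u t) + cosh (u t) * deriv u t * u t powr (\<alpha> + 1))) (at t)"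
        by (rule has_field_derivative_transform_within_open[OF _ o t]) (simp add: gF)
      have "deriv g t = 0" using st t unfolding stationary_def g_def by blast
      hence "(k/\<alpha>) * ((\<alpha> + 1) * u t powr (\<alpha> + 1 - of_nat 1) * deriv u t * sinh (u t) + cosh (u t) * deriv u t * u t powr (\<alpha> + 1)) = 0"
        using DERIV_imp_deriv[OF Dg] by simp
      hence e: "(\<alpha> + 1) * u t powr \<alpha> * deriv u t * sinh (u t) + cosh (u t) * deriv u t * (u t powr \<alpha> * u t) = 0"
        using False a0 pos[OF t] by (simp add: powr_add)
      have "u t powr \<alpha> * sinh (u t) * (deriv u t * ((\<alpha> + 1) + u t * cosh (u t) / sinh (u t))) = 0"
        using e pos[OF t] by (simp add: field_simps)
      thus ?thesis using pos[OF t] by simp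
    qed
    have U1: "deriv u t = 0" if "t \<in> I" for t
    proof (rule deriv_zero_from_w[OF o _ _ pos w that])
      fix s assume s: "s \<in> I"
      show "(u has_real_derivative deriv u s) (at s)" using reg_derivs(1)[OF rc s] .
      show "isCont (deriv u) s" using reg_derivs(3)[OF rc s] by (rule DERIV_isCont)
    qed
    have uc: "u t = u t0" if "t \<in> I" for t
      by (rule zero_deriv_const[OF iv _ t0 that]) (use reg_derivs(1)[OF rc] U1 in auto)
    define r where "r = u t0"
    have r: "r > 0" using pos[OF t0] by (simp add: r_def)
    have circ: "gam u v ` I \<subseteq> hcircle r"
      unfolding hcircle_def gam_def r_def using uc by auto
    have U2: "deriv (deriv u) t0 = 0" by (rule deriv_loc_const[OF o t0 U1])
    have SS: "(speed u v t0)^2 = (sinh r)^2 * (deriv v t0)^2"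
      using reg_facts(6)[OF rc t0] U1[OF t0] by (simp add: r_def)
    have shr: "sinh r > 0" using r by simp
    have V: "deriv v t0 \<noteq> 0" using SS S[OF t0] by auto
    have "k * speed u v t0 = - (sinh r * sinh r * cosh r * (deriv v t0)^3) / (speed u v t0)^2"
      unfolding k[OF t0, symmetric] reg_facts(5)[OF rc t0] U1[OF t0] U2 r_def using S[OF t0]
      by (simp add: power3_eq_cube power2_eq_square)
    also have "\<dots> = - cosh r * deriv v t0"
      unfolding SS using shr V by (simp add: power3_eq_cube power2_eq_square)
    finally have "- cosh r * deriv v t0 * r = \<alpha> * sinh r * deriv v t0"
      using X[OF t0] by (simp add: r_def)
    hence "(\<alpha> * sinh r + r * cosh r) * deriv v t0 = 0" by (simp add: algebra_simps)
    hence "\<alpha> * sinh r = - r * cosh r" using V by simp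
    hence "\<alpha> = - r * cosh r / sinh r" using shr by (simp add: field_simps)
    thus ?thesis using r circ by blast
  qed
qed



lemma deriv_const_fun: "deriv (\<lambda>_. c) = (\<lambda>_. (0::real))"
  by (rule ext, rule DERIV_imp_deriv, rule DERIV_const)

lemma deriv_id_fun: "deriv (\<lambda>t. t) = (\<lambda>_. (1::real))"
  by (rule ext, rule DERIV_imp_deriv, rule DERIV_ident)

lemma deriv_exp_fun: "deriv exp = (exp :: real \<Rightarrow> real)"
  by (rule ext, rule DERIV_imp_deriv, rule DERIV_exp)

lemma diff_on_of_deriv:
  fixes f :: "real \<Rightarrow> real"
  shows "(\<And>x. (f has_real_derivative f' x) (at x)) \<Longrightarrow> f differentiable_on S"
  by (metis differentiable_at_imp_differentiable_on real_differentiable_def)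

lemma iter_const: "(deriv ^^ k) (\<lambda>_. c) = (\<lambda>_. if k = 0 then c else (0::real))"
  by (induction k) (auto simp: deriv_const_fun)

lemma smooth_const: "smooth_on UNIV (\<lambda>_. c::real)"
  unfolding smooth_on_def iter_const by (auto intro!: diff_on_of_deriv DERIV_const)

lemma smooth_id: "smooth_on UNIV (\<lambda>t. t::real)"
  unfolding smooth_on_def
proof
  fix k show "(deriv ^^ k) (\<lambda>t. t::real) differentiable_on UNIV"
  proof (cases k)
    case 0 thus ?thesis by (auto intro!: diff_on_of_deriv DERIV_ident)
  next
    case (Suc j)
    have "(deriv ^^ k) (\<lambda>t. t::real) = (deriv ^^ j) (\<lambda>_. 1)"
      unfolding Suc funpow_Suc_right o_apply deriv_id_fun ..
    thus ?thesis unfolding iter_const by (auto intro!: diff_on_of_deriv DERIV_const)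
  qed
qed

lemma iter_exp: "(deriv ^^ k) exp = (exp :: real \<Rightarrow> real)"
  by (induction k) (auto simp: deriv_exp_fun)

lemma smooth_exp: "smooth_on UNIV (exp :: real \<Rightarrow> real)"
  unfolding smooth_on_def iter_exp by (auto intro!: diff_on_of_deriv DERIV_exp)

lemma ex_geo:
  fixes \<alpha> :: real
  shows "\<exists>(I :: real set) (u :: real \<Rightarrow> real) (v :: real \<Rightarrow> real) G.
            reg_curve I u v \<and> const_curvature I u v \<and>
            hgeodesic G \<and> Npole \<in> G \<and> gam u v ` I \<subseteq> G \<and> stationary \<alpha> I u v"
proof -
  define G where "G = {p\<in>H2. 0 * fst p + 1 * fst (snd p) + 0 * snd (snd p) = (0::real)}"
  have rc: "reg_curve UNIV exp (\<lambda>_. 0)"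
    unfolding reg_curve_def speed_def using smooth_exp smooth_const[of 0]
    by (simp add: deriv_exp_fun deriv_const_fun)
  have cc: "const_curvature UNIV exp (\<lambda>_. 0)"
    unfolding const_curvature_def using reg_facts(5)[OF rc]
    by (simp add: deriv_const_fun)
  have N: "Npole \<in> G" unfolding G_def Npole_def H2_def by simp
  have hg: "hgeodesic G" unfolding hgeodesic_def
  proof (intro conjI)
    show "G \<noteq> {}" using N by blast
    show "\<exists>a b c. (a, b, c) \<noteq> (0, 0, 0) \<and> G = {p \<in> H2. a * fst p + b * fst (snd p) + c * snd (snd p) = 0}"
      by (rule exI[of _ 0], rule exI[of _ 1], rule exI[of _ 0]) (simp add: G_def)
  qed
  have sub: "gam exp (\<lambda>_. 0) ` UNIV \<subseteq> G"
  proof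
    fix p assume "p \<in> gam exp (\<lambda>_. 0) ` UNIV"
    then obtain t where t: "p = gam exp (\<lambda>_. 0) t" by blast
    have "(sinh (exp t))^2 - (cosh (exp t))^2 = -1" using cosh_square_eq[of "exp t"] by simp
    thus "p \<in> G" unfolding t G_def H2_def gam_def Psi_def by simp
  qed
  show ?thesis using rc cc hg N sub geo_stat[OF rc hg N sub] by blast
qed

lemma ex_circ:
  fixes r :: real
  assumes r: "r > 0"
  shows "\<exists>(I :: real set) (u :: real \<Rightarrow> real) (v :: real \<Rightarrow> real).
            reg_curve I u v \<and> const_curvature I u v \<and>
            gam u v ` I \<subseteq> hcircle r \<and> stationary (- r * cosh r / sinh r) I u v"
proof -
  have shr: "sinh r > 0" using r by simp
  have rc: "reg_curve UNIV (\<lambda>_. r) (\<lambda>t. t)"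
    unfolding reg_curve_def speed_def using smooth_id smooth_const[of r] r shr
    by (simp add: deriv_id_fun deriv_const_fun)
  have cc: "const_curvature UNIV (\<lambda>_. r) (\<lambda>t. t)"
    unfolding const_curvature_def
  proof (intro exI ballI)
    fix t :: real assume "t \<in> UNIV"
    show "curvature (\<lambda>_. r) (\<lambda>t. t) t = curvature (\<lambda>_. r) (\<lambda>t. t) 0"
      unfolding reg_facts(5)[OF rc UNIV_I] by (simp add: deriv_id_fun deriv_const_fun speed_def)
  qed
  have sub: "gam (\<lambda>_. r) (\<lambda>t. t) ` UNIV \<subseteq> hcircle r"
    unfolding hcircle_def gam_def by auto
  show ?thesis using rc cc sub circ_stat[OF rc r sub refl] by blast
qed

theorem theorem2p5:
  fixes \<alpha> :: real
  assumes "\<alpha> \<noteq> 0"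
  shows "(\<forall>(I :: real set) (u :: real \<Rightarrow> real) (v :: real \<Rightarrow> real).
            reg_curve I u v \<and> const_curvature I u v \<longrightarrow>
              (stationary \<alpha> I u v \<longleftrightarrow>
                 ((\<exists>G. hgeodesic G \<and> Npole \<in> G \<and> gam u v ` I \<subseteq> G) \<or>
                  (\<exists>r>0. gam u v ` I \<subseteq> hcircle r \<and> \<alpha> = - r * cosh r / sinh r))))
       \<and> (\<exists>(I :: real set) (u :: real \<Rightarrow> real) (v :: real \<Rightarrow> real) G.
            reg_curve I u v \<and> const_curvature I u v \<and>
            hgeodesic G \<and> Npole \<in> G \<and> gam u v ` I \<subseteq> G \<and> stationary \<alpha> I u v)
       \<and> (\<forall>r>0. \<exists>(I :: real set) (u :: real \<Rightarrow> real) (v :: real \<Rightarrow> real).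
            reg_curve I u v \<and> const_curvature I u v \<and>
            gam u v ` I \<subseteq> hcircle r \<and> stationary (- r * cosh r / sinh r) I u v)"
proof -
  have A: "\<forall>(I :: real set) (u :: real \<Rightarrow> real) (v :: real \<Rightarrow> real).
            reg_curve I u v \<and> const_curvature I u v \<longrightarrow>
              (stationary \<alpha> I u v \<longleftrightarrow>
                 ((\<exists>G. hgeodesic G \<and> Npole \<in> G \<and> gam u v ` I \<subseteq> G) \<or>
                  (\<exists>r>0. gam u v ` I \<subseteq> hcircle r \<and> \<alpha> = - r * cosh r / sinh r)))"
  proof (intro allI impI)
    fix I :: "real set" and u v :: "real \<Rightarrow> real"
    assume h: "reg_curve I u v \<and> const_curvature I u v"
    show "stationary \<alpha> I u v \<longleftrightarrow>
                 ((\<exists>G. hgeodesic G \<and> Npole \<in> G \<and> gam u v ` I \<subseteq> G) \<or>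
                  (\<exists>r>0. gam u v ` I \<subseteq> hcircle r \<and> \<alpha> = - r * cosh r / sinh r))"
    proof
      assume "stationary \<alpha> I u v"
      thus "(\<exists>G. hgeodesic G \<and> Npole \<in> G \<and> gam u v ` I \<subseteq> G) \<or>
                  (\<exists>r>0. gam u v ` I \<subseteq> hcircle r \<and> \<alpha> = - r * cosh r / sinh r)"
        using stat_classify[OF assms] h by blast
    next
      assume "(\<exists>G. hgeodesic G \<and> Npole \<in> G \<and> gam u v ` I \<subseteq> G) \<or>
                  (\<exists>r>0. gam u v ` I \<subseteq> hcircle r \<and> \<alpha> = - r * cosh r / sinh r)"
      thus "stationary \<alpha> I u v"
      proof
        assume "\<exists>G. hgeodesic G \<and> Npole \<in> G \<and> gam u v ` I \<subseteq> G"
        then obtain G where "hgeodesic G" "Npole \<in> G" "gam u v ` I \<subseteq> G" by blast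
        thus ?thesis using geo_stat h by blast
      next
        assume "\<exists>r>0. gam u v ` I \<subseteq> hcircle r \<and> \<alpha> = - r * cosh r / sinh r"
        then obtain r where "r > 0" "gam u v ` I \<subseteq> hcircle r" "\<alpha> = - r * cosh r / sinh r" by blast
        thus ?thesis using circ_stat h by blast
      qed
    qed
  qed
  show ?thesis using A ex_geo[of \<alpha>] ex_circ by blast
qed

end
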